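(* Let $A=(Q,\Sigma,\delta,q_0,F)$ be a nondeterministic finite automaton, and let $A'=(2^Q,\Sigma,\delta',\{q_0\},F')$ be the deterministic automaton obtained from $A$ by the powerset construction, i.e. $\delta'(P,a)=\bigcup_{p\in P}\delta(p,a)$ for $P\subseteq Q$, $a\in\Sigma$ (extended to words in the usual way), and $F'=\{P\subseteq Q\mid P\cap F\neq\emptyset\}$. Assume that the part of $A'$ reachable from $\{q_0\}$ is the minimal deterministic finite automaton equivalent to $A$, and that this automaton is not permutation-free. Suppose $n\ge 2$, that $P_0,P_1,\ldots,P_{n-1}\subseteq Q$ are pairwise distinct states of this automaton, and that a word $w\in\Sigma^*$ induces a non-trivial permutation on them, namely $\delta'(P_i,w)=P_{i+1}$ for $0\le i<n-1$ and $\delta'(P_{n-1},w)=P_0$. Then there are no two indices $i\neq j$ with $P_i\subseteq P_j$.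
   Context: A deterministic finite automaton is permutation-free if there is no word $w\in\Sigma^*$ that induces a non-trivial (i.e. non-identity) permutation of some subset of its set of states, where $w$ induces a permutation of a set $S$ of states if the map $q\mapsto \delta(q,w)$ restricts to a bijection of $S$. *)

theory Defs
  imports Main
begin

definition nfa_wf :: "'q set \<Rightarrow> 'a set \<Rightarrow> ('q \<Rightarrow> 'a \<Rightarrow> 'q set) \<Rightarrow> 'q \<Rightarrow> 'q set \<Rightarrow> bool" where
  "nfa_wf Q Sig delta q0 F \<longleftrightarrow> finite Q \<and> finite Sig \<and> q0 \<in> Q \<and> F \<subseteq> Q \<and>
     (\<forall>q\<in>Q. \<forall>a\<in>Sig. delta q a \<subseteq> Q)"

fun nfa_steps :: "('q \<Rightarrow> 'a \<Rightarrow> 'q set) \<Rightarrow> 'q \<Rightarrow> 'a list \<Rightarrow> 'q set" where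
  "nfa_steps delta q [] = {q}"
| "nfa_steps delta q (a # w) = (\<Union>p\<in>delta q a. nfa_steps delta p w)"

definition nfa_lang :: "'a set \<Rightarrow> ('q \<Rightarrow> 'a \<Rightarrow> 'q set) \<Rightarrow> 'q \<Rightarrow> 'q set \<Rightarrow> 'a list set" where
  "nfa_lang Sig delta q0 F = {w \<in> lists Sig. nfa_steps delta q0 w \<inter> F \<noteq> {}}"

definition pow_step :: "('q \<Rightarrow> 'a \<Rightarrow> 'q set) \<Rightarrow> 'q set \<Rightarrow> 'a \<Rightarrow> 'q set" where
  "pow_step delta P a = (\<Union>p\<in>P. delta p a)"

fun pow_hat :: "('q \<Rightarrow> 'a \<Rightarrow> 'q set) \<Rightarrow> 'q set \<Rightarrow> 'a list \<Rightarrow> 'q set" where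
  "pow_hat delta P [] = P"
| "pow_hat delta P (a # w) = pow_hat delta (pow_step delta P a) w"

definition pow_final :: "'q set \<Rightarrow> 'q set set" where
  "pow_final F = {P. P \<inter> F \<noteq> {}}"

definition pow_reach :: "'a set \<Rightarrow> ('q \<Rightarrow> 'a \<Rightarrow> 'q set) \<Rightarrow> 'q \<Rightarrow> 'q set set" where
  "pow_reach Sig delta q0 = {pow_hat delta {q0} w | w. w \<in> lists Sig}"

definition pow_lang :: "'a set \<Rightarrow> ('q \<Rightarrow> 'a \<Rightarrow> 'q set) \<Rightarrow> 'q \<Rightarrow> 'q set \<Rightarrow> 'a list set" where
  "pow_lang Sig delta q0 F = {w \<in> lists Sig. pow_hat delta {q0} w \<in> pow_final F}"

text \<open>General (complete) DFAs over alphabet Sig; states are natural numbers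
  (every finite DFA is isomorphic to one of this form).\<close>
definition dfa_wf :: "nat set \<Rightarrow> 'a set \<Rightarrow> (nat \<Rightarrow> 'a \<Rightarrow> nat) \<Rightarrow> nat \<Rightarrow> nat set \<Rightarrow> bool" where
  "dfa_wf S Sig t s0 Fd \<longleftrightarrow> finite S \<and> s0 \<in> S \<and> Fd \<subseteq> S \<and>
     (\<forall>s\<in>S. \<forall>a\<in>Sig. t s a \<in> S)"

definition dfa_lang :: "'a set \<Rightarrow> (nat \<Rightarrow> 'a \<Rightarrow> nat) \<Rightarrow> nat \<Rightarrow> nat set \<Rightarrow> 'a list set" where
  "dfa_lang Sig t s0 Fd = {w \<in> lists Sig. foldl t s0 w \<in> Fd}"

definition pow_is_minimal_dfa :: "'a set \<Rightarrow> ('q \<Rightarrow> 'a \<Rightarrow> 'q set) \<Rightarrow> 'q \<Rightarrow> 'q set \<Rightarrow> bool" where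
  "pow_is_minimal_dfa Sig delta q0 F \<longleftrightarrow>
     pow_lang Sig delta q0 F = nfa_lang Sig delta q0 F \<and>
     (\<forall>S t s0 Fd. dfa_wf S Sig t s0 Fd \<and> dfa_lang Sig t s0 Fd = nfa_lang Sig delta q0 F
        \<longrightarrow> card (pow_reach Sig delta q0) \<le> card S)"

definition pow_permutation_free :: "'a set \<Rightarrow> ('q \<Rightarrow> 'a \<Rightarrow> 'q set) \<Rightarrow> 'q \<Rightarrow> bool" where
  "pow_permutation_free Sig delta q0 \<longleftrightarrow>
     \<not> (\<exists>w\<in>lists Sig. \<exists>S \<subseteq> pow_reach Sig delta q0.
          bij_betw (\<lambda>P. pow_hat delta P w) S S \<and> (\<exists>P\<in>S. pow_hat delta P w \<noteq> P))"

end

theory Submission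
  imports Defs
begin

lemma pow_hat_mono: "X \<subseteq> Y \<Longrightarrow> pow_hat delta X w \<subseteq> pow_hat delta Y w"
proof (induction w arbitrary: X Y)
  case Nil then show ?case by simp
next
  case (Cons a w)
  have "pow_step delta X a \<subseteq> pow_step delta Y a" using Cons.prems unfolding pow_step_def by blast
  then show ?case using Cons.IH by simp
qed

lemma funpow_mono_gen:
  fixes f :: "'b set \<Rightarrow> 'b set"
  assumes "\<And>X Y. X \<subseteq> Y \<Longrightarrow> f X \<subseteq> f Y" "X \<subseteq> Y"
  shows "(f ^^ (m::nat)) X \<subseteq> (f ^^ m) Y"
proof (induction m)
  case 0 show ?case using assms(2) by simp
next
  case (Suc m) then show ?case using assms(1) by simp
qed

theorem mainTheorem1:
  fixes Q :: "'q set" and Sig :: "'a set" and delta :: "'q \<Rightarrow> 'a \<Rightarrow> 'q set"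
    and q0 :: 'q and F :: "'q set" and n :: nat and P :: "nat \<Rightarrow> 'q set" and w :: "'a list"
  assumes "nfa_wf Q Sig delta q0 F"
    and "pow_is_minimal_dfa Sig delta q0 F"
    and "\<not> pow_permutation_free Sig delta q0"
    and "n \<ge> 2"
    and "\<forall>i<n. P i \<in> pow_reach Sig delta q0"
    and "inj_on P {..<n}"
    and "w \<in> lists Sig"
    and "\<forall>i. i + 1 < n \<longrightarrow> pow_hat delta (P i) w = P (i + 1)"
    and "pow_hat delta (P (n - 1)) w = P 0"
  shows "\<not> (\<exists>i<n. \<exists>j<n. i \<noteq> j \<and> P i \<subseteq> P j)"
proof
  assume "\<exists>i<n. \<exists>j<n. i \<noteq> j \<and> P i \<subseteq> P j"
  then obtain i j where ij: "i < n" "j < n" "i \<noteq> j" "P i \<subseteq> P j" by blast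
  define f where "f = (\<lambda>X. pow_hat delta X w)"
  define R where "R = (\<lambda>k. P (k mod n))"
  have fmono: "\<And>X Y. X \<subseteq> Y \<Longrightarrow> f X \<subseteq> f Y" unfolding f_def by (rule pow_hat_mono)
  have step: "f (R k) = R (Suc k)" for k
  proof (cases "Suc (k mod n) < n")
    case True
    then have "Suc k mod n = Suc (k mod n)" by (simp add: mod_Suc)
    then show ?thesis using True assms(8) unfolding R_def f_def by simp
  next
    case False
    have "k mod n < n" using assms(4) by simp
    with False have "k mod n = n - 1" by linarith
    moreover then have "Suc k mod n = 0" using assms(4) by (simp add: mod_Suc)
    ultimately show ?thesis using assms(9) unfolding R_def f_def by simp
  qed
  have iter: "(f ^^ m) (R k) = R (k + m)" for m k
    by (induction m) (auto simp: step)
  define d where "d = j + n - i"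
  have Rid: "R (i + d) = P j" unfolding R_def d_def using ij by simp
  have Ri: "R i = P i" unfolding R_def using ij by simp
  have base: "R i \<subseteq> R (i + d)" using Rid Ri ij by simp
  have chain: "R (i + d) \<subseteq> R (i + Suc k * d)" for k
  proof (induction k)
    case 0 then show ?case by simp
  next
    case (Suc k)
    have "(f ^^ (Suc k * d)) (R i) \<subseteq> (f ^^ (Suc k * d)) (R (i + d))"
      by (rule funpow_mono_gen[OF fmono base])
    then have "R (i + Suc k * d) \<subseteq> R (i + Suc (Suc k) * d)"
      by (simp add: iter algebra_simps)
    with Suc show ?case by blast
  qed
  obtain k where k: "n = Suc k" using assms(4) by (cases n) auto
  have "R (i + Suc k * d) = R i" unfolding R_def using k
    by (metis mod_mult_self2 mult.commute)
  then have "R (i + d) \<subseteq> R i" using chain[of k] by simp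
  with base have "P i = P j" using Ri Rid by simp
  with assms(6) ij show False by (auto simp: inj_on_def)
qed

end
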